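(* Let $(E,\tau)$ be a uniquely generated violator space. Then the partition $\mathcal{P}$ of $2^E$ into the equivalence classes of the relation $X\sim Y\iff\tau(X)=\tau(Y)$ is a hypercube partition of $2^E$, i.e., every equivalence class is an interval $[A,B]=\{C\subseteq E: A\subseteq C\subseteq B\}$ for some $A\subseteq B\subseteq E$.
   Context: $E$ is a finite set and $\tau:2^E\to 2^E$. $(E,\tau)$ is a violator space if (C1) $Y\subseteq\tau(Y)$ for all $Y\subseteq E$, and (C22) for all $F,G\subseteq E$, $F\subseteq G\subseteq\tau(F)$ implies $\tau(G)=\tau(F)$. For $X\subseteq E$, a generator of $X$ is any $B\subseteq E$ with $\tau(B)=\tau(X)$; a basis of $X$ is an inclusion-minimal generator of $X$. The space is uniquely generated if every $X\subseteq E$ has exactly one basis. A hypercube partition of $2^E$ is a partition of $2^E$ into disjoint intervals $[A,B]$. *)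

theory Defs
  imports Main
begin

text \<open>A violator space (E, tau): E finite, tau maps subsets of E to subsets of E,
  satisfying (C1) and (C22). Only the values of tau on subsets of E matter.\<close>
definition violator_space :: "'a set \<Rightarrow> ('a set \<Rightarrow> 'a set) \<Rightarrow> bool" where
  "violator_space E tau \<longleftrightarrow> finite E
     \<and> (\<forall>Y. Y \<subseteq> E \<longrightarrow> tau Y \<subseteq> E)
     \<and> (\<forall>Y. Y \<subseteq> E \<longrightarrow> Y \<subseteq> tau Y)
     \<and> (\<forall>F G. F \<subseteq> E \<longrightarrow> G \<subseteq> E \<longrightarrow> F \<subseteq> G \<longrightarrow> G \<subseteq> tau F \<longrightarrow> tau G = tau F)"

definition is_generator :: "'a set \<Rightarrow> ('a set \<Rightarrow> 'a set) \<Rightarrow> 'a set \<Rightarrow> 'a set \<Rightarrow> bool" where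
  "is_generator E tau X B \<longleftrightarrow> B \<subseteq> E \<and> tau B = tau X"

definition is_basis :: "'a set \<Rightarrow> ('a set \<Rightarrow> 'a set) \<Rightarrow> 'a set \<Rightarrow> 'a set \<Rightarrow> bool" where
  "is_basis E tau X B \<longleftrightarrow> is_generator E tau X B
     \<and> (\<forall>B'. B' \<subset> B \<longrightarrow> \<not> is_generator E tau X B')"

definition uniquely_generated :: "'a set \<Rightarrow> ('a set \<Rightarrow> 'a set) \<Rightarrow> bool" where
  "uniquely_generated E tau \<longleftrightarrow> (\<forall>X. X \<subseteq> E \<longrightarrow> (\<exists>!B. is_basis E tau X B))"

definition interval :: "'a set \<Rightarrow> 'a set \<Rightarrow> 'a set set" where
  "interval A B = {C. A \<subseteq> C \<and> C \<subseteq> B}"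

definition tau_class :: "'a set \<Rightarrow> ('a set \<Rightarrow> 'a set) \<Rightarrow> 'a set \<Rightarrow> 'a set set" where
  "tau_class E tau X = {Y. Y \<subseteq> E \<and> tau Y = tau X}"

definition hypercube_partition :: "'a set \<Rightarrow> 'a set set set \<Rightarrow> bool" where
  "hypercube_partition E P \<longleftrightarrow>
     \<Union>P = Pow E \<and> {} \<notin> P
     \<and> (\<forall>p\<in>P. \<forall>q\<in>P. p \<noteq> q \<longrightarrow> p \<inter> q = {})
     \<and> (\<forall>p\<in>P. \<exists>A B. A \<subseteq> B \<and> B \<subseteq> E \<and> p = interval A B)"

end

theory Submission
  imports Defs
begin

lemma min_sub:
  assumes "finite S" "P S"
  shows "\<exists>B\<subseteq>S. P B \<and> (\<forall>B'. B' \<subset> B \<longrightarrow> \<not> P B')"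
  using assms
proof (induction S rule: finite_psubset_induct)
  case (psubset A)
  show ?case
  proof (cases "\<exists>B'. B' \<subset> A \<and> P B'")
    case True
    then obtain B' where "B' \<subset> A" "P B'" by blast
    with psubset.IH[of B'] obtain B where "B \<subseteq> B'" "P B" "\<forall>B''. B'' \<subset> B \<longrightarrow> \<not> P B''"
      by blast
    then show ?thesis using \<open>B' \<subset> A\<close> by blast
  next
    case False
    then show ?thesis using psubset.prems by blast
  qed
qed

lemma vs_props: assumes vs: "violator_space E tau" shows
 "finite E" and "\<And>Y. Y \<subseteq> E \<Longrightarrow> tau Y \<subseteq> E"
    and "\<And>Y. Y \<subseteq> E \<Longrightarrow> Y \<subseteq> tau Y"
    and "\<And>F G. F \<subseteq> E \<Longrightarrow> G \<subseteq> E \<Longrightarrow> F \<subseteq> G \<Longrightarrow> G \<subseteq> tau F \<Longrightarrow> tau G = tau F"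
proof -
  have d: "finite E \<and> (\<forall>Y. Y \<subseteq> E \<longrightarrow> tau Y \<subseteq> E)
     \<and> (\<forall>Y. Y \<subseteq> E \<longrightarrow> Y \<subseteq> tau Y)
     \<and> (\<forall>F G. F \<subseteq> E \<longrightarrow> G \<subseteq> E \<longrightarrow> F \<subseteq> G \<longrightarrow> G \<subseteq> tau F \<longrightarrow> tau G = tau F)"
    using vs unfolding violator_space_def .
  show "finite E" using d by (rule conjunct1)
  show "\<And>Y. Y \<subseteq> E \<Longrightarrow> tau Y \<subseteq> E" by (rule d[THEN conjunct2, THEN conjunct1, rule_format])
  show "\<And>Y. Y \<subseteq> E \<Longrightarrow> Y \<subseteq> tau Y" by (rule d[THEN conjunct2, THEN conjunct2, THEN conjunct1, rule_format])
  show "\<And>F G. F \<subseteq> E \<Longrightarrow> G \<subseteq> E \<Longrightarrow> F \<subseteq> G \<Longrightarrow> G \<subseteq> tau F \<Longrightarrow> tau G = tau F"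
    by (rule d[THEN conjunct2, THEN conjunct2, THEN conjunct2, rule_format])
qed

lemma class_interval:
  assumes vs: "violator_space E tau" and ug: "uniquely_generated E tau" and X: "X \<subseteq> E"
  shows "\<exists>A B. A \<subseteq> B \<and> B \<subseteq> E \<and> tau_class E tau X = interval A B"
proof -
  have "\<exists>!B. is_basis E tau X B" using ug X unfolding uniquely_generated_def by blast
  then obtain A where A: "is_basis E tau X A"
    and uniq: "\<And>B. is_basis E tau X B \<Longrightarrow> B = A"
    by (rule ex1E) blast
  note fin = vs_props(1)[OF vs] and cl = vs_props(2)[OF vs]
    and ext = vs_props(3)[OF vs] and c22 = vs_props(4)[OF vs]
  have AG: "A \<subseteq> E \<and> tau A = tau X"
    using A unfolding is_basis_def is_generator_def by (rule conjunct1)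
  have AE: "A \<subseteq> E" and tA: "tau A = tau X" using AG by (rule conjunct1, rule conjunct2)
  have "A \<subseteq> tau X" using ext[OF AE] tA by simp
  moreover have "tau X \<subseteq> E" using cl[OF X] .
  moreover have "tau_class E tau X = interval A (tau X)"
  proof (rule set_eqI, rule iffI)
    fix Y assume "Y \<in> tau_class E tau X"
    hence Y: "Y \<subseteq> E" "tau Y = tau X" unfolding tau_class_def by auto
    have "finite Y" using Y(1) fin finite_subset by blast
    have "is_generator E tau X Y" using Y unfolding is_generator_def by simp
    from min_sub[OF \<open>finite Y\<close>, of "is_generator E tau X", OF this] obtain B where
      "B \<subseteq> Y" "is_generator E tau X B" "\<forall>B'. B' \<subset> B \<longrightarrow> \<not> is_generator E tau X B'"
      by blast
    hence "is_basis E tau X B" unfolding is_basis_def by blast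
    hence "B = A" by (rule uniq)
    with \<open>B \<subseteq> Y\<close> have "A \<subseteq> Y" by simp
    moreover have "Y \<subseteq> tau X" using ext[OF Y(1)] Y(2) by simp
    ultimately show "Y \<in> interval A (tau X)" unfolding interval_def by blast
  next
    fix Y assume "Y \<in> interval A (tau X)"
    hence Y: "A \<subseteq> Y" "Y \<subseteq> tau X" unfolding interval_def by auto
    have YE: "Y \<subseteq> E" using Y(2) cl[OF X] by blast
    have "tau Y = tau A" using c22[OF AE YE Y(1)] Y(2) tA by simp
    with YE tA show "Y \<in> tau_class E tau X" unfolding tau_class_def by simp
  qed
  ultimately show ?thesis by (intro exI conjI)
qed

theorem mainTheorem16:
  fixes E :: "'a set" and tau :: "'a set \<Rightarrow> 'a set"
  assumes "violator_space E tau"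
    and "uniquely_generated E tau"
  shows "hypercube_partition E {tau_class E tau X | X. X \<subseteq> E}"
  unfolding hypercube_partition_def
proof (intro conjI ballI impI)
  show "\<Union> {tau_class E tau X |X. X \<subseteq> E} = Pow E"
  proof
    show "\<Union> {tau_class E tau X |X. X \<subseteq> E} \<subseteq> Pow E"
      unfolding tau_class_def by blast
    show "Pow E \<subseteq> \<Union> {tau_class E tau X |X. X \<subseteq> E}"
    proof
      fix Y assume "Y \<in> Pow E"
      hence "Y \<in> tau_class E tau Y" "tau_class E tau Y \<in> {tau_class E tau X |X. X \<subseteq> E}"
        unfolding tau_class_def by auto
      thus "Y \<in> \<Union> {tau_class E tau X |X. X \<subseteq> E}" by blast
    qed
  qed
  show "{} \<notin> {tau_class E tau X |X. X \<subseteq> E}"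
  proof
    assume "{} \<in> {tau_class E tau X |X. X \<subseteq> E}"
    then obtain X where "X \<subseteq> E" "{} = tau_class E tau X" by blast
    moreover have "X \<in> tau_class E tau X" using \<open>X \<subseteq> E\<close> unfolding tau_class_def by simp
    ultimately show False by simp
  qed
next
  fix p q assume "p \<in> {tau_class E tau X |X. X \<subseteq> E}" "q \<in> {tau_class E tau X |X. X \<subseteq> E}" "p \<noteq> q"
  then obtain X1 X2 where p: "p = tau_class E tau X1" "q = tau_class E tau X2" by blast
  show "p \<inter> q = {}"
  proof (rule ccontr)
    assume "p \<inter> q \<noteq> {}"
    then obtain Z where "Z \<in> p" "Z \<in> q" by blast
    hence "tau X1 = tau X2" using p unfolding tau_class_def by auto
    hence "p = q" using p unfolding tau_class_def by simp
    with \<open>p \<noteq> q\<close> show False by simp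
  qed
next
  fix p assume "p \<in> {tau_class E tau X |X. X \<subseteq> E}"
  then show "\<exists>A B. A \<subseteq> B \<and> B \<subseteq> E \<and> p = interval A B"
    using class_interval[OF assms] by blast
qed

end
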